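(* Let $n\ge1$, $D\ge1$, $T\ge1$ be integers and let $f\in\mathbb{Q}[x_1,\dots,x_n]$ be a polynomial of total degree at most $D$ with $t\le T$ terms. If $N$ is an integer with $$N>\frac{T(T-1)}{2}\log_2\big[(D+1)^n-1\big]-\frac14T^2+\frac12T,$$ then among any $N$ distinct odd primes $p_1,\dots,p_N$ at least one is a good prime for $f$.
   Context: $\mathbf{mod}(m,p)$ denotes the least nonnegative residue of the integer $m$ modulo $p$. For a prime $p$, let $f_{x,p}(x):=f\big(x,x^{\mathbf{mod}(D+1,p)},x^{\mathbf{mod}((D+1)^2,p)},\dots,x^{\mathbf{mod}((D+1)^{n-1},p)}\big)\in\mathbb{Q}[x]$, i.e. the substitution $x_i=x^{\mathbf{mod}((D+1)^{i-1},p)}$ for $i=1,\dots,n$. The prime $p$ is a good prime for $f$ if this substitution maps the distinct monomials of $f$ to pairwise distinct monomials in $x$, i.e. for any two distinct exponent vectors $(e_1,\dots,e_n)\neq(e'_1,\dots,e'_n)$ of monomials occurring in $f$, $\sum_{i=1}^n e_i\,\mathbf{mod}((D+1)^{i-1},p)\neq\sum_{i=1}^n e'_i\,\mathbf{mod}((D+1)^{i-1},p)$ (equivalently, $f_{x,p}$ has the same number of terms as $f$). *)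

theory Defs
  imports Complex_Main "HOL-Library.Poly_Mapping" "HOL-Computational_Algebra.Primes"
begin

text \<open>A polynomial in Q[x_1,...,x_n] is represented as a finitely supported map from
  exponent vectors (nat =>0 nat, variable x_(i+1) has index i) to rational coefficients,
  as in the AFP's Polynomials entry.\<close>

type_synonym mpoly_rat = "(nat \<Rightarrow>\<^sub>0 nat) \<Rightarrow>\<^sub>0 rat"

definition in_vars :: "nat \<Rightarrow> mpoly_rat \<Rightarrow> bool" where
  "in_vars n f \<longleftrightarrow> (\<forall>m\<in>Poly_Mapping.keys (f::mpoly_rat). Poly_Mapping.keys m \<subseteq> {..<n})"

definition total_deg_le :: "mpoly_rat \<Rightarrow> nat \<Rightarrow> bool" where
  "total_deg_le f D \<longleftrightarrow> (\<forall>m\<in>Poly_Mapping.keys (f::mpoly_rat). (\<Sum>i\<in>Poly_Mapping.keys m. Poly_Mapping.lookup m i) \<le> D)"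

definition num_terms :: "mpoly_rat \<Rightarrow> nat" where
  "num_terms f = card (Poly_Mapping.keys f)"

text \<open>Exponent of x in the image of the monomial m under x_(i+1) := x^(mod((D+1)^i, p)).\<close>
definition subst_exp :: "nat \<Rightarrow> nat \<Rightarrow> nat \<Rightarrow> (nat \<Rightarrow>\<^sub>0 nat) \<Rightarrow> nat" where
  "subst_exp n D p m = (\<Sum>i<n. Poly_Mapping.lookup m i * ((D + 1) ^ i mod p))"

definition good_prime :: "nat \<Rightarrow> nat \<Rightarrow> mpoly_rat \<Rightarrow> nat \<Rightarrow> bool" where
  "good_prime n D f p \<longleftrightarrow> inj_on (subst_exp n D p) (Poly_Mapping.keys f)"

end

theory Submission imports Defs begin

lemma primes_prod_dvd:
  fixes P :: "nat set"
  assumes "finite P" "\<forall>p\<in>P. prime p \<and> p dvd x"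
  shows "\<Prod>P dvd x"
  using assms
proof (induction P rule: finite_induct)
  case empty then show ?case by simp
next
  case (insert p P)
  have pp: "prime p" "p dvd x" using insert.prems by auto
  have "\<not> p dvd \<Prod>P"
  proof
    assume "p dvd \<Prod>P"
    then obtain q where "q \<in> P" "p dvd q" using prime_dvd_prod_iff[OF insert.hyps(1) pp(1), of id] by auto
    then have "p = q" using insert.prems pp(1) by (metis insert_iff primes_dvd_imp_eq)
    with \<open>q \<in> P\<close> insert.hyps(2) show False by simp
  qed
  then have "coprime p (\<Prod>P)" using pp(1) by (simp add: prime_imp_coprime)
  then show ?case using insert pp by (simp add: divides_mult)
qed

lemma digits_inj:
  fixes b :: nat
  shows "(\<forall>i<n. f i < b) \<Longrightarrow> (\<forall>i<n. g i < b) \<Longrightarrow>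
    (\<Sum>i<n. f i * b^i) = (\<Sum>i<n. g i * b^i) \<Longrightarrow> \<forall>i<n. f i = g i"
proof (induction n arbitrary: f g)
  case 0 then show ?case by simp
next
  case (Suc n)
  have e: "\<And>h::nat\<Rightarrow>nat. (\<Sum>i<Suc n. h i * b^i) = h 0 + b * (\<Sum>i<n. h (Suc i) * b^i)"
  proof -
    fix h :: "nat \<Rightarrow> nat"
    have "(\<Sum>i<Suc n. h i * b^i) = h 0 * b^0 + (\<Sum>i<n. h (Suc i) * b^(Suc i))"
      by (rule sum.lessThan_Suc_shift)
    also have "(\<Sum>i<n. h (Suc i) * b^(Suc i)) = b * (\<Sum>i<n. h (Suc i) * b^i)"
      by (simp add: sum_distrib_left mult.left_commute)
    finally show "(\<Sum>i<Suc n. h i * b^i) = h 0 + b * (\<Sum>i<n. h (Suc i) * b^i)" by simp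
  qed
  have f0: "f 0 < b" "g 0 < b" using Suc.prems by auto
  have eq: "f 0 + b * (\<Sum>i<n. f (Suc i) * b^i) = g 0 + b * (\<Sum>i<n. g (Suc i) * b^i)"
    using Suc.prems(3) e by metis
  have "(f 0 + b * (\<Sum>i<n. f (Suc i) * b^i)) mod b = f 0" using f0 by simp
  moreover have "(g 0 + b * (\<Sum>i<n. g (Suc i) * b^i)) mod b = g 0" using f0 by simp
  ultimately have h0: "f 0 = g 0" using eq by metis
  have "(\<Sum>i<n. f (Suc i) * b^i) = (\<Sum>i<n. g (Suc i) * b^i)"
    using eq h0 f0 by simp
  moreover have "\<forall>i<n. f (Suc i) < b" using Suc.prems(1) by simp
  moreover have "\<forall>i<n. g (Suc i) < b" using Suc.prems(2) by simp
  ultimately have "\<forall>i<n. f (Suc i) = g (Suc i)" using Suc.IH[of "\<lambda>i. f (Suc i)" "\<lambda>i. g (Suc i)"] by blast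
  then show ?case using h0 by (metis less_Suc_eq_0_disj)
qed

lemma geom_digit: "(\<Sum>i<n. D * (D+1::nat)^i) = (D+1)^n - 1"
proof (induction n)
  case 0 then show ?case by simp
next
  case (Suc n)
  have "(D+1::nat)^n \<ge> 1" by simp
  then show ?case using Suc by (simp add: algebra_simps)
qed

lemma card_lt_pairs:
  fixes A :: "nat set"
  assumes "finite A"
  shows "2 * card {(a,b). a\<in>A \<and> b\<in>A \<and> a<b} = card A * card A - card A"
proof -
  define Q where "Q = {(a,b). a\<in>A \<and> b\<in>A \<and> a<b}"
  have fQ: "finite Q"
    by (rule finite_subset[of _ "A \<times> A"]) (auto simp: Q_def assms)
  have off: "A \<times> A - {(a,b). a = b} = Q \<union> prod.swap ` Q" unfolding Q_def by auto
  have disj: "Q \<inter> prod.swap ` Q = {}" unfolding Q_def by auto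
  have cs: "card (prod.swap ` Q) = card Q" by (simp add: card_image)
  have "card (Q \<union> prod.swap ` Q) = 2 * card Q"
    using card_Un_disjoint[OF fQ finite_imageI[OF fQ] disj] cs by simp
  moreover have "card (A \<times> A - {(a,b). a = b}) = card A * card A - card A"
  proof -
    have "(A \<times> A) \<inter> {(a,b). a = b} = (\<lambda>a. (a,a)) ` A" by auto
    moreover have "card ((\<lambda>a. (a,a)) ` A) = card A" by (simp add: card_image inj_on_def)
    ultimately show ?thesis using assms
      by (metis card_Diff_subset_Int card_cartesian_product finite_Int finite_SigmaI)
  qed
  ultimately show ?thesis using off unfolding Q_def by simp
qed

lemma real_part:
  fixes N T :: nat and x a l C :: real
  assumes "real N * l \<le> C * x" "real N > C * (x / a) - real (T^2)/4 + real T / 2"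
    "x \<ge> l" "2*l > 3*a" "a > 0" "C \<ge> 0" "2 * C = real T * (real T - 1)"
  shows False
proof -
  have l0: "l > 0" using assms by linarith
  have s1: "real N \<le> C*x/l" using assms(1) l0 by (simp add: field_simps)
  have s2: "C*(x/a) - C*x/l = C*x*(l-a)/(a*l)" using l0 assms(5) by (simp add: field_simps)
  have "C*l*(l-a) \<le> C*x*(l-a)"
    using assms(3,4,5,6) by (intro mult_right_mono mult_left_mono) auto
  then have "C*l*(l-a)/(a*l) \<le> C*x*(l-a)/(a*l)" using l0 assms(5)
    by (intro divide_right_mono) auto
  moreover have "C*l*(l-a)/(a*l) = C*(l-a)/a" using l0 by simp
  ultimately have s3: "C*(l-a)/a \<le> C*x*(l-a)/(a*l)" by simp
  have "a \<le> (l-a)*2" using assms(4) by (simp add: algebra_simps)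
  then have "C * a \<le> C*((l-a)*2)" using assms(6) by (rule mult_left_mono)
  then have "C * a \<le> C*(l-a)*2" by (simp add: mult.assoc)
  then have s4: "C/2 \<le> C*(l-a)/a" using assms(5) by (simp add: field_simps)
  have "real (T^2)/4 - real T/2 \<le> C/2" using assms(7) by (simp add: power2_eq_square algebra_simps)
  then show False using s1 s2 s3 s4 assms(2) by linarith
qed

lemma prime_odd_ge3: "prime (p::nat) \<Longrightarrow> odd p \<Longrightarrow> p \<ge> 3"
  using prime_ge_2_nat[of p] by (cases "p = 2") auto

lemma subst_mod:
  "subst_exp n D p m mod p = (\<Sum>i<n. Poly_Mapping.lookup m i * (D+1)^i) mod p"
proof -
  have "(\<lambda>i. Poly_Mapping.lookup m i * ((D + 1) ^ i mod p) mod p) =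
        (\<lambda>i. Poly_Mapping.lookup m i * (D + 1) ^ i mod p)" (is "?L = ?R")
    by (simp add: mod_mult_right_eq)
  have "subst_exp n D p m mod p = (\<Sum>i<n. Poly_Mapping.lookup m i * ((D + 1) ^ i mod p) mod p) mod p"
    unfolding subst_exp_def by (rule mod_sum_eq[symmetric])
  also have "\<dots> = (\<Sum>i<n. Poly_Mapping.lookup m i * (D + 1) ^ i mod p) mod p"
    by (simp only: \<open>?L = ?R\<close>)
  also have "\<dots> = (\<Sum>i<n. Poly_Mapping.lookup m i * (D+1)^i) mod p"
    by (rule mod_sum_eq)
  finally show ?thesis .
qed

theorem theorem3p2:
  fixes n D T N :: nat and f :: mpoly_rat and P :: "nat set"
  assumes "n \<ge> 1" "D \<ge> 1" "T \<ge> 1"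
    and "in_vars n f" and "total_deg_le f D" and "num_terms f \<le> T"
    and "real N > real (T * (T - 1)) / 2 * log 2 (real ((D + 1) ^ n - 1))
                  - real (T ^ 2) / 4 + real T / 2"
    and "N \<ge> 1"
    and "finite P" and "card P = N" and "\<forall>p\<in>P. prime p \<and> odd p"
  shows "\<exists>p\<in>P. good_prime n D f p"
proof (rule ccontr)
  assume nog: "\<not> (\<exists>p\<in>P. good_prime n D f p)"
  define S where "S = Poly_Mapping.keys f"
  define K where "K m = (\<Sum>i<n. Poly_Mapping.lookup m i * (D+1)^i)" for m :: "nat \<Rightarrow>\<^sub>0 nat"
  define B where "B = (D + 1) ^ n - 1"
  have fS: "finite S" unfolding S_def by simp
  have zero: "Poly_Mapping.lookup m i = 0" if "m \<in> S" "i \<ge> n" for m i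
    using assms(4) that unfolding in_vars_def S_def
    by (metis in_keys_iff lessThan_iff not_le subsetD)
  have dig: "Poly_Mapping.lookup m i \<le> D" if "m \<in> S" for m i
  proof (cases "i \<in> Poly_Mapping.keys m")
    case True
    have "Poly_Mapping.lookup m i \<le> (\<Sum>j\<in>Poly_Mapping.keys m. Poly_Mapping.lookup m j)"
      using True by (intro member_le_sum) auto
    also have "\<dots> \<le> D" using assms(5) that unfolding total_deg_le_def S_def by auto
    finally show ?thesis .
  next
    case False then show ?thesis by (simp add: in_keys_iff)
  qed
  have eqS: "m = m'" if "m \<in> S" "m' \<in> S" "\<forall>i<n. Poly_Mapping.lookup m i = Poly_Mapping.lookup m' i" for m m'
  proof (rule poly_mapping_eqI)
    fix i show "Poly_Mapping.lookup m i = Poly_Mapping.lookup m' i"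
      using that zero[of m i] zero[of m' i] by (cases "i < n") auto
  qed
  have Kinj: "inj_on K S"
  proof (rule inj_onI)
    fix m m' assume h: "m \<in> S" "m' \<in> S" "K m = K m'"
    have "\<forall>i<n. Poly_Mapping.lookup m i = Poly_Mapping.lookup m' i"
      by (rule digits_inj[of n "Poly_Mapping.lookup m" "D+1" "Poly_Mapping.lookup m'"])
        (use h dig in \<open>auto simp: K_def less_Suc_eq_le\<close>)
    then show "m = m'" using eqS h by blast
  qed
  have Kb: "K m \<le> B" if "m \<in> S" for m
  proof -
    have "K m \<le> (\<Sum>i<n. D * (D+1)^i)" unfolding K_def
      by (intro sum_mono mult_right_mono dig that) auto
    then show ?thesis using geom_digit B_def by simp
  qed
  have "P \<noteq> {}" using assms(8,10) by auto
  then obtain p0 where p0: "p0 \<in> P" by blast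
  have n2: "n \<ge> 2"
  proof (rule ccontr)
    assume "\<not> n \<ge> 2"
    then have n1: "n = 1" using assms(1) by simp
    have "p0 > 1" using p0 assms(11) prime_gt_1_nat by blast
    then have "subst_exp n D p0 m = Poly_Mapping.lookup m 0" for m
      using n1 by (simp add: subst_exp_def)
    then have "good_prime n D f p0" unfolding good_prime_def
      using eqS n1 unfolding S_def by (auto intro!: inj_onI)
    then show False using nog p0 by blast
  qed
  have B3: "B \<ge> 3"
  proof -
    have a1: "(2::nat)^2 \<le> 2^n" using n2 by (intro power_increasing) auto
    have a2: "(2::nat)^n \<le> (D+1)^n" using assms(2) by (intro power_mono) auto
    have "(D+1)^n \<ge> (2::nat)^2" using a1 a2 by linarith
    then show ?thesis unfolding B_def by simp
  qed
  define A where "A = K ` S"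
  define Q where "Q = {(a,b). a\<in>A \<and> b\<in>A \<and> a<b}"
  have fA: "finite A" unfolding A_def using fS by simp
  have fQ: "finite Q"
    by (rule finite_subset[of _ "A \<times> A"]) (auto simp: Q_def fA)
  have cA: "card A \<le> T" unfolding A_def using card_image[OF Kinj] assms(6)
    unfolding num_terms_def S_def by simp
  have cQ: "2 * card Q \<le> T * T - T"
  proof -
    have "2 * card Q = card A * card A - card A" unfolding Q_def by (rule card_lt_pairs[OF fA])
    also have "\<dots> = card A * (card A - 1)" by (simp add: algebra_simps)
    also have "\<dots> \<le> T * (T - 1)" using cA by (intro mult_mono) auto
    also have "\<dots> = T * T - T" by (simp add: algebra_simps)
    finally show ?thesis .
  qed
  define X where "X = (\<Prod>(a,b)\<in>Q. b - a)"
  have Xpos: "X > 0" unfolding X_def using fQ by (intro prod_pos) (auto simp: Q_def)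
  have pdvd: "p dvd X" if "p \<in> P" for p
  proof -
    have "\<not> good_prime n D f p" using nog that by blast
    then obtain m m' where mm: "m \<in> S" "m' \<in> S" "m \<noteq> m'"
      "subst_exp n D p m = subst_exp n D p m'"
      unfolding good_prime_def inj_on_def S_def by blast
    have Kne: "K m \<noteq> K m'" using Kinj mm unfolding inj_on_def by blast
    have Km: "K m mod p = K m' mod p" using subst_mod[of n D p m] subst_mod[of n D p m'] mm(4)
      unfolding K_def by simp
    obtain a b where ab: "(a,b) \<in> Q" "p dvd b - a"
    proof (cases "K m < K m'")
      case True
      then have "p dvd K m' - K m" using Km mod_eq_dvd_iff_nat[of "K m" "K m'" p] by simp
      then show ?thesis using that[of "K m" "K m'"] True mm unfolding Q_def A_def by auto
    next
      case False
      then have lt: "K m' < K m" using Kne by simp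
      then have "p dvd K m - K m'" using Km mod_eq_dvd_iff_nat[of "K m'" "K m" p] by simp
      then show ?thesis using that[of "K m'" "K m"] lt mm unfolding Q_def A_def by auto
    qed
    have "(\<lambda>(a,b). b - a) (a,b) dvd X" unfolding X_def by (rule dvd_prodI[OF fQ ab(1)])
    then show ?thesis using ab(2) by (auto intro: dvd_trans)
  qed
  have "\<Prod>P dvd X" using primes_prod_dvd[OF assms(9)] pdvd assms(11) by blast
  then have PX: "\<Prod>P \<le> X" using Xpos by (simp add: dvd_imp_le)
  have "X \<le> (\<Prod>q\<in>Q. B)" unfolding X_def
  proof (intro prod_mono)
    fix q assume "q \<in> Q"
    then obtain a b where "q = (a,b)" "a \<in> A" "b \<in> A" by (auto simp: Q_def)
    then have "b \<le> B" using Kb unfolding A_def by auto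
    then show "0 \<le> (case q of (a, b) \<Rightarrow> b - a) \<and> (case q of (a, b) \<Rightarrow> b - a) \<le> B"
      using \<open>q = (a,b)\<close> by auto
  qed
  then have XB: "X \<le> B ^ card Q" by simp
  have "(\<Prod>p\<in>P. (3::nat)) \<le> \<Prod>P"
    by (intro prod_mono) (use assms(11) prime_odd_ge3 in auto)
  then have "3 ^ N \<le> B ^ card Q" using PX XB assms(10) by simp
  then have "real (3 ^ N) \<le> real (B ^ card Q)" by linarith
  then have "ln (3 ^ N) \<le> ln (real B ^ card Q)" using B3 by simp
  then have L1: "real N * ln 3 \<le> real (card Q) * ln (real B)" using B3 by (simp add: ln_realpow)
  define C where "C = real (T * (T - 1)) / 2"
  have lnB: "ln (real B) \<ge> ln 3" using B3 by simp
  have lnBpos: "ln (real B) \<ge> 0" using B3 by simp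
  have "T \<le> T*T" using assms(3) by simp
  then have "2*card Q + T \<le> T*T" using cQ by linarith
  then have r1: "2*real (card Q) + real T \<le> real T * real T"
    by (metis of_nat_add of_nat_le_iff of_nat_mult of_nat_numeral)
  have r2: "real (T * (T - 1)) = real T * real T - real T" using assms(3)
    by (simp add: of_nat_diff algebra_simps)
  have "real (card Q) \<le> C" using r1 r2 unfolding C_def by simp
  then have L2: "real N * ln 3 \<le> C * ln (real B)"
    using L1 lnBpos by (meson mult_right_mono order_trans)
  have l98: "2 * ln (3::real) > 3 * ln 2"
  proof -
    have a: "ln ((3::real)^2) = 2 * ln 3" using ln_realpow[of "3::real" 2] by simp
    have b: "ln ((2::real)^3) = 3 * ln 2" using ln_realpow[of "2::real" 3] by simp
    have c: "ln ((3::real)^2) > ln (2^3)" by simp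
    show ?thesis using a b c by linarith
  qed
  have hyp: "real N > C * (ln (real B) / ln 2) - real (T^2)/4 + real T / 2"
    using assms(7) unfolding C_def B_def log_def by simp
  have C2: "2 * C = real T * (real T - 1)" unfolding C_def using assms(3) by (simp add: of_nat_diff)
  show False
    by (rule real_part[OF L2 hyp lnB l98 _ _ C2]) (auto simp: C_def)
qed

end
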